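(* (i) Let $d\ge0$ be an integer and let $p$ be the real polynomial of degree at most $d$ minimizing $$\int_0^1\bigl(1-q(z)z\bigr)^2\,dz$$ over all real polynomials $q$ of degree at most $d$. Then $p(z)>0$ for all $z\in(0,1]$. (ii) Let $d\ge0$ be an integer and $0<\mu<1$, and let $T_{d+1}$ be the Chebyshev polynomial of the first kind of degree $d+1$. Define $$r(z)=\frac{T_{d+1}\!\left(\frac{1+\mu-2z}{1-\mu}\right)}{T_{d+1}\!\left(\frac{1+\mu}{1-\mu}\right)},\qquad p(z)=\frac{1-r(z)}{z}.$$ Then $p$ is a polynomial of degree $d$ and $p(z)>0$ for all $z\in(0,1]$.
   Context: The Chebyshev polynomial of the first kind $T_k$ is the polynomial satisfying $T_k(\cos\theta)=\cos(k\theta)$. *)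

theory Defs
  imports "HOL-Analysis.Analysis" "HOL-Computational_Algebra.Polynomial"
begin

definition chebyshev_T :: "nat \<Rightarrow> real poly" where
  "chebyshev_T k = (THE p. \<forall>\<theta>::real. poly p (cos \<theta>) = cos (real k * \<theta>))"

definition ls_obj :: "real poly \<Rightarrow> real" where
  "ls_obj q = integral {0..1} (\<lambda>z. (1 - poly q z * z)\<^sup>2)"

end

theory Submission
  imports Defs
begin

fun cheb :: "nat \<Rightarrow> real poly" where
  "cheb 0 = 1"
| "cheb (Suc 0) = [:0,1:]"
| "cheb (Suc (Suc n)) = smult 2 (pCons 0 (cheb (Suc n))) - cheb n"

lemma cheb_cos: "poly (cheb n) (cos t) = cos (real n * t)"
proof (induction n rule: cheb.induct)
  case (3 n)
  have "cos (real (Suc (Suc n)) * t) = cos ((real n + 1) * t + t)" by (simp add: algebra_simps)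
  also have "\<dots> = 2 * cos t * cos ((real n + 1) * t) - cos ((real n + 1) * t - t)"
    unfolding cos_add cos_diff by (simp add: algebra_simps)
  also have "(real n + 1) * t - t = real n * t" by (simp add: algebra_simps)
  finally show ?case using 3 by (simp add: algebra_simps)
qed auto

lemma cheb_cosh: "poly (cheb n) (cosh t) = cosh (real n * t)"
proof (induction n rule: cheb.induct)
  case (3 n)
  have "cosh (real (Suc (Suc n)) * t) = cosh ((real n + 1) * t + t)" by (simp add: algebra_simps)
  also have "\<dots> = 2 * cosh t * cosh ((real n + 1) * t) - cosh ((real n + 1) * t + (- t))"
    unfolding cosh_add by (simp add: algebra_simps)
  also have "(real n + 1) * t + (- t) = real n * t" by (simp add: algebra_simps)
  finally show ?case using 3 by (simp add: algebra_simps)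
qed auto

lemma cheb_deg: "degree (cheb n) \<le> n \<and> coeff (cheb n) n = (if n = 0 then 1 else 2 ^ (n - 1))"
proof (induction n rule: cheb.induct)
  case (3 n)
  then show ?case
    by (auto simp: degree_diff_le coeff_eq_0 intro!: degree_diff_le le_trans[OF degree_pCons_le] )
qed auto

lemma cheb_degree: "degree (cheb n) = n"
proof -
  have "coeff (cheb n) n \<noteq> 0" using cheb_deg[of n] by simp
  then have "n \<le> degree (cheb n)" by (rule le_degree)
  then show ?thesis using cheb_deg[of n] by simp
qed

lemma poly_eq_on_interval:
  fixes p q :: "real poly"
  assumes "a < b" "\<And>x. x \<in> {a..b} \<Longrightarrow> poly p x = poly q x"
  shows "p = q"
proof (rule ccontr)
  assume "p \<noteq> q"
  then have "p - q \<noteq> 0" by simp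
  then have "finite {x. poly (p - q) x = 0}" by (rule poly_roots_finite)
  moreover have "{a..b} \<subseteq> {x. poly (p - q) x = 0}" using assms(2) by auto
  ultimately have "finite {a..b}" by (rule finite_subset[rotated])
  with assms(1) show False using infinite_Icc by blast
qed

lemma chebyshev_T_eq: "chebyshev_T n = cheb n"
  unfolding chebyshev_T_def
proof (rule the_equality)
  fix p assume H: "\<forall>\<theta>::real. poly p (cos \<theta>) = cos (real n * \<theta>)"
  show "p = cheb n"
  proof (rule poly_eq_on_interval[of "-1" 1])
    fix x :: real assume "x \<in> {-1..1}"
    then have "cos (arccos x) = x" by simp
    then show "poly p x = poly (cheb n) x" using H cheb_cos by metis
  qed simp
qed (simp add: cheb_cos)

lemma cheb_le1: "x \<in> {-1..1} \<Longrightarrow> poly (cheb n) x \<le> 1"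
proof -
  assume "x \<in> {-1..1}"
  then have "cos (arccos x) = x" by simp
  then show ?thesis using cheb_cos[of n "arccos x"] by (metis cos_le_one)
qed

lemma part2:
  fixes d :: nat and \<mu> :: real
  assumes "0 < \<mu>" "\<mu> < 1"
  shows "(let r = (\<lambda>z::real. poly (chebyshev_T (d+1)) ((1 + \<mu> - 2*z) / (1 - \<mu>))
                                / poly (chebyshev_T (d+1)) ((1 + \<mu>) / (1 - \<mu>)))
             in \<exists>P::real poly. degree P = d
                  \<and> (\<forall>z. z \<noteq> 0 \<longrightarrow> poly P z = (1 - r z) / z)
                  \<and> (\<forall>z\<in>{0<..1::real}. poly P z > 0))"
proof -
  define T where "T = cheb (d+1)"
  define x0 where "x0 = (1 + \<mu>) / (1 - \<mu>)"
  define C where "C = poly T x0"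
  define r where "r = (\<lambda>z::real. poly T ((1 + \<mu> - 2*z) / (1 - \<mu>)) / C)"
  have x0: "x0 > 1" using assms unfolding x0_def by (simp add: field_simps)
  define t0 where "t0 = arcosh x0"
  have t0: "t0 > 0" "cosh t0 = x0" using x0 unfolding t0_def by auto
  have C: "C = cosh (real (d+1) * t0)" unfolding C_def T_def using cheb_cosh t0 by metis
  have C1: "C > 1"
  proof -
    have "cosh 0 < cosh (real (d+1) * t0)"
      using t0 by (subst cosh_real_nonneg_less_iff) auto
    then show ?thesis using C by simp
  qed
  define R where "R = smult (1/C) (T \<circ>\<^sub>p [:x0, -2/(1-\<mu>):])"
  have polyR: "poly R z = r z" for z
  proof -
    have "x0 + z * (-2/(1-\<mu>)) = (1 + \<mu> - 2*z) / (1 - \<mu>)"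
    proof -
      have "(1 + \<mu> - 2*z)/(1-\<mu>) = (1+\<mu>)/(1-\<mu>) - (2*z)/(1-\<mu>)" by (rule diff_divide_distrib)
      moreover have "x0 + z * (-2/(1-\<mu>)) = x0 - (2*z)/(1-\<mu>)" by simp
      ultimately show ?thesis unfolding x0_def by simp
    qed
    then show ?thesis unfolding R_def r_def by (simp add: poly_pcompose)
  qed
  have R0: "poly R 0 = 1" unfolding R_def poly_pcompose using C1 by (simp add: C_def poly_pcompose)
  have degR: "degree R = d + 1"
    unfolding R_def using C1 assms by (simp add: degree_pcompose T_def cheb_degree)
  obtain a P where aP: "[:1:] - R = pCons a P" by (meson pCons_cases)
  have "a = poly ([:1:] - R) 0" using aP by simp
  then have a0: "a = 0" using R0 by simp
  have "degree ([:1:] - R) = d + 1" using degR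
    by (metis add_is_0 degree_minus degree_pCons_0 degree_add_eq_right minus_diff_eq
          one_neq_zero uminus_add_conv_diff zero_less_iff_neq_zero one_pCons degree_1)
  then have degP: "degree P = d" using aP a0
    by (metis add_right_cancel degree_pCons_eq_if nat.distinct(1) Suc_eq_plus1 add_is_0 one_neq_zero)
  have Pz: "poly P z = (1 - r z) / z" if "z \<noteq> 0" for z
  proof -
    have "poly ([:1:] - R) z = z * poly P z" using aP a0 by simp
    then show ?thesis using that polyR by (simp add: field_simps)
  qed
  have pos: "poly P z > 0" if z: "z \<in> {0<..1::real}" for z
  proof -
    define x where "x = (1 + \<mu> - 2*z) / (1 - \<mu>)"
    have xl: "x \<ge> -1" "x < x0" using z assms unfolding x_def x0_def by (auto simp: field_simps)
    have "poly T x < C"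
    proof (cases "x \<le> 1")
      case True then show ?thesis using cheb_le1[of x "d+1"] xl C1 T_def by auto
    next
      case False
      define t where "t = arcosh x"
      have t: "t \<ge> 0" "cosh t = x" using False unfolding t_def by auto
      have "t < t0" using xl False x0 unfolding t_def t0_def by simp
      then have "cosh (real (d+1) * t) < cosh (real (d+1) * t0)"
        using t t0 by (subst cosh_real_nonneg_less_iff) auto
      then show ?thesis using C cheb_cosh t T_def by metis
    qed
    then have "r z < 1" unfolding r_def x_def[symmetric] using C1 by simp
    then show ?thesis using Pz z by auto
  qed
  show ?thesis unfolding Let_def chebyshev_T_eq
    using degP Pz pos unfolding r_def C_def T_def x0_def by blast
qed


definition II :: "real poly \<Rightarrow> real" where "II g = integral {0..1} (poly g)"

lemma cont_poly: "continuous_on (S::real set) (poly (g::real poly))"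
  using continuous_on_poly[OF continuous_on_id, of S g] by simp

lemma int_poly: "(poly (g::real poly)) integrable_on {a..(b::real)}"
  by (rule integrable_continuous_interval[OF cont_poly])

lemma II_add: "II (f + g) = II f + II g"
proof -
  have "poly (f + g) = (\<lambda>x. poly f x + poly g x)" by (rule ext) simp
  then show ?thesis unfolding II_def by (simp add: integral_add int_poly)
qed

lemma II_diff: "II (f - g) = II f - II g"
proof -
  have "poly (f - g) = (\<lambda>x. poly f x - poly g x)" by (rule ext) simp
  then show ?thesis unfolding II_def by (simp add: integral_diff int_poly)
qed

lemma II_smult: "II (smult c f) = c * II f"
  unfolding II_def by (simp add: poly_smult[abs_def])

lemma subst_aff:
  fixes F :: "real \<Rightarrow> real"
  assumes "continuous_on UNIV F" "\<beta> > 0"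
  shows "integral {0..1} (\<lambda>t. F (\<alpha> + \<beta> * t)) = integral {\<alpha>..\<alpha>+\<beta>} F / \<beta>"
proof -
  have H1: "((\<lambda>t. \<beta> *\<^sub>R F (\<alpha> + \<beta> * t)) has_integral integral {\<alpha> + \<beta> * 0..\<alpha> + \<beta> * 1} F) {0..1}"
    using assms
    by (intro has_integral_substitution[where c = "\<alpha>" and d = "\<alpha> + \<beta>"])
       (auto intro!: derivative_eq_intros continuous_on_subset[OF assms(1)] simp: mult_left_le)
  have H2: "((\<lambda>t. \<beta> * F (\<alpha> + \<beta> * t)) has_integral integral {\<alpha>..\<alpha>+\<beta>} F) {0..1}"
    using H1 by simp
  have "integral {0..1} (\<lambda>t. \<beta> * F (\<alpha> + \<beta> * t)) = integral {\<alpha>..\<alpha>+\<beta>} F"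
    using H2 by (rule integral_unique)
  then show ?thesis using assms by (simp add: field_simps)
qed

lemma refl01:
  fixes H :: "real \<Rightarrow> real"
  assumes "continuous_on UNIV H"
  shows "integral {0..1} (\<lambda>t. H (1 - t)) = integral {0..1} H"
proof -
  have "integral {0..1} (\<lambda>t. H (1 - t)) = integral {-1..0} (\<lambda>y. H (1 + y))"
    using Henstock_Kurzweil_Integration.integral_reflect_real[of 0 "-1" "\<lambda>y. H (1 + y)"] by simp
  also have "\<dots> = integral {0..1} (\<lambda>t. (\<lambda>y. H (1 + y)) (-1 + 1 * t))"
    using subst_aff[of "\<lambda>y. H (1 + y)" 1 "-1"] assms
    by (simp add: continuous_on_compose2[OF assms] continuous_intros)
  finally show ?thesis by simp
qed

lemma II_refl: "II (g \<circ>\<^sub>p [:1, -1:]) = II g"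
proof -
  have "poly (g \<circ>\<^sub>p [:1, -1:]) = (\<lambda>t. poly g (1 - t))" by (rule ext) (simp add: poly_pcompose)
  then show ?thesis unfolding II_def using refl01[of "poly g"] cont_poly by simp
qed

lemma II_split:
  assumes "0 < c" "c < 1"
  shows "II g = c * II (g \<circ>\<^sub>p [:c, -c:]) + (1 - c) * II (g \<circ>\<^sub>p [:c, 1 - c:])"
proof -
  have "II g = integral {0..c} (poly g) + integral {c..1} (poly g)"
    unfolding II_def using assms Henstock_Kurzweil_Integration.integral_combine[of 0 c 1 "poly g"] int_poly by simp
  also have "integral {c..1} (poly g) = (1 - c) * II (g \<circ>\<^sub>p [:c, 1 - c:])"
  proof -
    have "poly (g \<circ>\<^sub>p [:c, 1 - c:]) = (\<lambda>t. poly g (c + (1 - c) * t))"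
      by (rule ext) (simp add: poly_pcompose algebra_simps)
    then show ?thesis using subst_aff[of "poly g" "1 - c" c] assms cont_poly
      by (simp add: II_def)
  qed
  also have "integral {0..c} (poly g) = c * II (g \<circ>\<^sub>p [:c, -c:])"
  proof -
    have "integral {0..1} (\<lambda>t. poly g (0 + c * t)) = integral {0..0+c} (poly g) / c"
      using subst_aff[of "poly g" c 0] assms cont_poly by blast
    moreover have "integral {0..1} (\<lambda>t. (\<lambda>s. poly g (c * s)) (1 - t)) = integral {0..1} (\<lambda>s. poly g (c * s))"
      by (rule refl01) (intro continuous_intros cont_poly)
    moreover have "(\<lambda>t. (\<lambda>s. poly g (c * s)) (1 - t)) = poly (g \<circ>\<^sub>p [:c, -c:])"
      by (rule ext) (simp add: poly_pcompose algebra_simps)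
    ultimately show ?thesis using assms by (simp add: II_def field_simps)
  qed
  finally show ?thesis by simp
qed

lemma II_sq_nonneg: "II (g * g) \<ge> 0"
  unfolding II_def by (rule integral_nonneg[OF int_poly]) simp

lemma II_zero:
  assumes "II g = 0" "\<And>x. x \<in> {0..1} \<Longrightarrow> 0 \<le> poly g x" "x \<in> {0..1}"
  shows "poly g x = 0"
proof -
  have "(poly g has_integral 0) (cbox 0 1)"
    using assms(1) int_poly[of g 0 1] unfolding II_def
    by (metis cbox_interval has_integral_integrable_integral)
  then show ?thesis
    using has_integral_0_cbox_imp_0[of 0 1 "poly g" x] assms cont_poly
    by (auto simp: cbox_interval box_real)
qed

lemma II_sq_zero:
  assumes "II (g * g) = 0" shows "g = 0"
proof -
  have "poly (g * g) x = 0" if "x \<in> {0..1}" for x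
    using II_zero[OF assms _ that] by simp
  then have "\<forall>x\<in>{0..1::real}. poly g x = 0" by simp
  then have "finite {0..1::real} \<or> g = 0"
    using poly_roots_finite[of g] by (metis (mono_tags, lifting) finite_subset mem_Collect_eq subsetI)
  then show ?thesis using infinite_Icc[of "0::real" 1] by simp
qed

lemma sq_le1:
  fixes a :: real
  assumes "1 \<le> a" "a^2 \<le> 1" shows "a = 1"
proof (rule ccontr)
  assume "a \<noteq> 1"
  then have "1 < a" using assms(1) by simp
  then have "1 < a * a" using less_1_mult by blast
  then show False using assms(2) by (simp add: power2_eq_square)
qed

lemma ls_obj_II: "ls_obj q = II (([:1:] - pCons 0 q) * ([:1:] - pCons 0 q))"
proof -
  have "(\<lambda>z. (1 - poly q z * z)\<^sup>2) = poly (([:1:] - pCons 0 q) * ([:1:] - pCons 0 q))"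
    by (rule ext) (simp add: power2_eq_square algebra_simps)
  then show ?thesis unfolding ls_obj_def II_def by simp
qed

lemma part1:
  fixes d :: nat and p :: "real poly"
  assumes degp: "degree p \<le> d" and minp: "\<forall>q. degree q \<le> d \<longrightarrow> ls_obj p \<le> ls_obj q"
  shows "\<forall>z\<in>{0<..1::real}. poly p z > 0"
proof -
  define e where "e = [:1:] - pCons 0 p"
  have e0: "poly e 0 = 1" unfolding e_def by simp
  have polye: "poly e z = 1 - z * poly p z" for z unfolding e_def by simp
  have dege: "degree e \<le> d + 1"
  proof -
    have "degree (pCons 0 p) \<le> d+1" using degp degree_pCons_le[of 0 p] by simp
    then show ?thesis unfolding e_def by (intro degree_diff_le) simp_all
  qed
  have Ne: "ls_obj p = II (e * e)" unfolding e_def by (rule ls_obj_II)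
  have min: "II (e * e) \<le> II (g * g)" if g0: "poly g 0 = 1" and dg: "degree g \<le> d + 1" for g
  proof -
    obtain a q' where aq: "g - [:1:] = pCons a q'" by (meson pCons_cases)
    have "a = poly (g - [:1:]) 0" using aq by simp
    then have a0: "a = 0" using g0 by simp
    have "degree (g - [:1:]) \<le> d + 1" using dg
      by (metis degree_diff_le le_trans one_pCons degree_pCons_0 zero_le)
    then have dq: "degree q' \<le> d" using aq a0
      by (cases "q' = 0") auto
    have gq: "g = [:1:] - pCons 0 (- q')"
      using aq a0 by (simp add: algebra_simps)
    have "ls_obj p \<le> ls_obj (- q')" using minp dq by simp
    then show ?thesis using Ne ls_obj_II[of "- q'"] gq by simp
  qed
  have Nepos: "II (e * e) > 0"
  proof -
    have "e \<noteq> 0" using e0 by auto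
    then have "II (e * e) \<noteq> 0" using II_sq_zero by blast
    then show ?thesis using II_sq_nonneg[of e] by linarith
  qed
  have orth: "II (e * h) = 0" if h0: "poly h 0 = 0" and dh: "degree h \<le> d + 1" for h
  proof -
    define J where "J = II (e * h)"
    define M where "M = II (h * h)"
    have M0: "M \<ge> 0" unfolding M_def by (rule II_sq_nonneg)
    have key: "0 \<le> 2 * s * J + s^2 * M" for s
    proof -
      have "poly (e + smult s h) 0 = 1" using e0 h0 by simp
      moreover have "degree (e + smult s h) \<le> d + 1"
        using dege dh by (meson degree_add_le degree_smult_le le_trans)
      ultimately have "II (e * e) \<le> II ((e + smult s h) * (e + smult s h))" by (rule min)
      moreover have "(e + smult s h) * (e + smult s h) = e * e + smult (2 * s) (e * h) + smult (s^2) (h * h)"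
        by (rule poly_ext) (simp add: algebra_simps power2_eq_square)
      ultimately show ?thesis by (simp add: II_add II_smult J_def M_def)
    qed
    define s where "s = - J / (M + 1)"
    have "0 \<le> 2 * s * J + s^2 * M" by (rule key)
    then have "0 \<le> (2 * s * J + s^2 * M) * (M + 1)^2" using M0 by simp
    also have "(2 * s * J + s^2 * M) * (M + 1)^2 = - (J^2 * (M + 2))"
    proof -
      have "M + 1 \<noteq> 0" using M0 by linarith
      then have su: "s * (M + 1) = - J" unfolding s_def by simp
      have "(2 * s * J + s^2 * M) * (M + 1)^2 = 2*J*(s*(M+1))*(M+1) + (s*(M+1))^2 * M"
        by (simp add: power2_eq_square algebra_simps)
      then show ?thesis unfolding su by (simp add: power2_eq_square algebra_simps)
    qed
    finally have "J^2 * (M + 2) \<le> 0" by simp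
    then have "J^2 \<le> 0" using M0 by (simp add: mult_le_0_iff)
    then show ?thesis unfolding J_def by simp
  qed
  have uniq: "g = e" if g0: "poly g 0 = 1" and dg: "degree g \<le> d + 1" and le: "II (g * g) \<le> II (e * e)" for g
  proof -
    define h where "h = g - e"
    have "poly h 0 = 0" unfolding h_def using g0 e0 by simp
    moreover have "degree h \<le> d + 1" unfolding h_def using dg dege by (meson degree_diff_le)
    ultimately have o: "II (e * h) = 0" by (rule orth)
    have "g * g = e * e + smult 2 (e * h) + h * h"
      unfolding h_def by (rule poly_ext) (simp add: algebra_simps)
    then have "II (g * g) = II (e * e) + II (h * h)" using o by (simp add: II_add II_smult)
    then have "II (h * h) = 0" using le II_sq_nonneg[of h] by linarith
    then have "h = 0" by (rule II_sq_zero)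
    then show ?thesis unfolding h_def by simp
  qed
  have scal: "a^2 * II (e * e) \<le> II (g * g)"
    if ga: "poly g 0 = a" and a1: "a \<ge> 1" and dg: "degree g \<le> d + 1" for g a
  proof -
    have "poly (smult (1/a) g) 0 = 1" using ga a1 by simp
    moreover have "degree (smult (1/a) g) \<le> d + 1" using dg by (meson degree_smult_le le_trans)
    ultimately have "II (e * e) \<le> II (smult (1/a) g * smult (1/a) g)" by (rule min)
    also have "smult (1/a) g * smult (1/a) g = smult ((1/a)^2) (g * g)"
      by (simp add: power2_eq_square)
    finally have "II (e * e) \<le> (1/a)^2 * II (g * g)" by (simp add: II_smult)
    then show ?thesis using a1 by (simp add: field_simps power2_eq_square)
  qed
  have x_orth: "II (e * [:0, 1:]) = 0" by (rule orth) auto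
  show ?thesis
  proof (intro ballI, rule ccontr)
    fix z :: real assume z: "z \<in> {0<..1}" and np: "\<not> poly p z > 0"
    define a where "a = poly e z"
    have a1: "a \<ge> 1" unfolding a_def polye using z np by (simp add: mult_nonneg_nonpos)
    show False
    proof (cases "z = 1")
      case True
      define g where "g = e \<circ>\<^sub>p [:1, -1:]"
      have ga: "poly g 0 = a" unfolding g_def a_def True by (simp add: poly_pcompose)
      have dg: "degree g \<le> d + 1" unfolding g_def using dege by (simp add: degree_pcompose)
      have Ng: "II (g * g) = II (e * e)"
        unfolding g_def pcompose_mult[symmetric] by (rule II_refl)
      have "a^2 * II (e * e) \<le> II (e * e)" using scal[OF ga a1 dg] Ng by simp
      then have "a^2 \<le> 1" using Nepos by simp
      then have "a = 1" using sq_le1[OF a1] by blast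
      then have ge: "g = e" using uniq ga dg Ng by simp
      have "II (e * (e - 1)) = 0" by (rule orth) (use e0 dege in \<open>auto intro: order_trans[OF degree_diff_le]\<close>)
      then have I1: "II (e * e) = II e" by (simp add: algebra_simps II_diff)
      have "e = e * [:1, -1:] + e * [:0, 1:]"
        by (rule poly_ext) (simp add: algebra_simps)
      then have "II e = II (e * [:1, -1:]) + II (e * [:0, 1:])" by (metis II_add)
      also have "e * [:1, -1:] = (e * [:0, 1:]) \<circ>\<^sub>p [:1, -1:]"
      proof -
        have "(e * [:0, 1:]) \<circ>\<^sub>p [:1, -1:] = (e \<circ>\<^sub>p [:1, -1:]) * ([:0, 1:] \<circ>\<^sub>p [:1, -1:])"
          by (rule pcompose_mult)
        also have "\<dots> = e * [:1, -1:]" using ge unfolding g_def by (simp add: pcompose_pCons)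
        finally show ?thesis by simp
      qed
      finally have "II e = 0" using x_orth II_refl by simp
      then show False using I1 Nepos by simp
    next
      case False
      with z have c: "0 < z" "z < 1" by auto
      define g1 where "g1 = e \<circ>\<^sub>p [:z, -z:]"
      define g2 where "g2 = e \<circ>\<^sub>p [:z, 1 - z:]"
      have ga1: "poly g1 0 = a" unfolding g1_def a_def by (simp add: poly_pcompose)
      have ga2: "poly g2 0 = a" unfolding g2_def a_def by (simp add: poly_pcompose)
      have dg1: "degree g1 \<le> d + 1" unfolding g1_def using dege by (simp add: degree_pcompose)
      have dg2: "degree g2 \<le> d + 1" unfolding g2_def using dege by (simp add: degree_pcompose)
      have spl: "II (e * e) = z * II (g1 * g1) + (1 - z) * II (g2 * g2)"
        unfolding g1_def g2_def pcompose_mult[symmetric] using c by (rule II_split)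
      have s1: "a^2 * II (e * e) \<le> II (g1 * g1)" by (rule scal[OF ga1 a1 dg1])
      have s2: "a^2 * II (e * e) \<le> II (g2 * g2)" by (rule scal[OF ga2 a1 dg2])
      have "z * (a^2 * II (e * e)) + (1 - z) * (a^2 * II (e * e)) \<le> z * II (g1 * g1) + (1 - z) * II (g2 * g2)"
        using c s1 s2 by (intro add_mono mult_left_mono) auto
      then have "z * (a^2 * II (e * e)) + (1 - z) * (a^2 * II (e * e)) \<le> II (e * e)"
        using spl by simp
      then have "a^2 * II (e * e) \<le> II (e * e)" by (simp add: algebra_simps)
      then have "a^2 \<le> 1" using Nepos by simp
      then have a_1: "a = 1" using sq_le1[OF a1] by blast
      have "(1 - z) * II (e * e) \<le> (1 - z) * II (g2 * g2)"
        using s2 c a_1 by (intro mult_left_mono) auto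
      moreover have "z * II (e * e) + (1 - z) * II (e * e) = II (e * e)" by (simp add: algebra_simps)
      ultimately have "z * II (g1 * g1) \<le> z * II (e * e)"
        using spl by linarith
      then have "II (g1 * g1) \<le> II (e * e)" using c by simp
      then have ge: "g1 = e" using uniq ga1 dg1 a_1 by simp
      show False
      proof (cases "degree e = 0")
        case True
        then obtain k where "e = [:k:]" by (metis degree_eq_zeroE)
        then have "e = [:1:]" using e0 by simp
        then have "II [:0, 1:] = 0" using x_orth by simp
        then have "poly [:0, 1::real:] 1 = 0"
          by (rule II_zero) auto
        then show False by simp
      next
        case False
        have "lead_coeff (e \<circ>\<^sub>p [:z, -z:]) = lead_coeff e * (-z) ^ degree e"
          using c by (subst lead_coeff_comp) auto
        then have "lead_coeff e = lead_coeff e * (-z) ^ degree e" using ge g1_def by simp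
        moreover have "lead_coeff e \<noteq> 0" using e0 by auto
        ultimately have "(-z) ^ degree e = 1" by simp
        then have "z ^ degree e = 1" by (metis abs_minus_cancel abs_of_pos c(1) power_abs abs_one)
        moreover have "z ^ degree e < 1" using c False by (simp add: power_less_one_iff)
        ultimately show False by simp
      qed
    qed
  qed
qed

theorem mainTheorem6:
  shows "(\<forall>(d::nat) (p::real poly).
            degree p \<le> d \<and> (\<forall>q::real poly. degree q \<le> d \<longrightarrow> ls_obj p \<le> ls_obj q)
            \<longrightarrow> (\<forall>z\<in>{0<..1::real}. poly p z > 0))
       \<and> (\<forall>(d::nat) (\<mu>::real). 0 < \<mu> \<and> \<mu> < 1 \<longrightarrow>
            (let r = (\<lambda>z::real. poly (chebyshev_T (d+1)) ((1 + \<mu> - 2*z) / (1 - \<mu>))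
                                / poly (chebyshev_T (d+1)) ((1 + \<mu>) / (1 - \<mu>)))
             in \<exists>P::real poly. degree P = d
                  \<and> (\<forall>z. z \<noteq> 0 \<longrightarrow> poly P z = (1 - r z) / z)
                  \<and> (\<forall>z\<in>{0<..1::real}. poly P z > 0)))"
  proof (intro conjI allI impI)
  fix d :: nat and p :: "real poly"
  assume "degree p \<le> d \<and> (\<forall>q::real poly. degree q \<le> d \<longrightarrow> ls_obj p \<le> ls_obj q)"
  then show "\<forall>z\<in>{0<..1::real}. poly p z > 0" using part1 by blast
next
  fix d :: nat and \<mu> :: real
  assume "0 < \<mu> \<and> \<mu> < 1"
  then show "let r = (\<lambda>z::real. poly (chebyshev_T (d+1)) ((1 + \<mu> - 2*z) / (1 - \<mu>))
                                / poly (chebyshev_T (d+1)) ((1 + \<mu>) / (1 - \<mu>)))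
             in \<exists>P::real poly. degree P = d
                  \<and> (\<forall>z. z \<noteq> 0 \<longrightarrow> poly P z = (1 - r z) / z)
                  \<and> (\<forall>z\<in>{0<..1::real}. poly P z > 0)" using part2 by blast
qed

end
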